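(* For all even integers $n\ge2$ and real numbers $a\ge1$, $x\in(0,\pi)$, we have $S^*_{n,a}(x)\ge 2\sin(x)$. Equality holds if and only if $n=2$, $a=1$ (any $x$), or $n=4$, $a=1$, $x=\pi/2$.
   Context: For a real number $a$ and integers $0\le m$, $\binom{m+a}{m}=\frac{(a+1)(a+2)\cdots(a+m)}{m!}$ (equal to $1$ when $m=0$). For an integer $n\ge1$, $S^*_{n,a}(x)=\sum_{1\le j\le n,\ j\text{ odd}}\binom{n+a-j}{n-j}\sin(jx)$. *)

theory Defs
  imports Complex_Main
begin

text \<open>binom_ma m a = binomial coefficient (m+a choose m) = (a+1)(a+2)...(a+m)/m!, for real a.\<close>
definition binom_ma :: "nat \<Rightarrow> real \<Rightarrow> real" where
  "binom_ma m a = (\<Prod>i=1..m. (a + real i)) / fact m"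

definition S_star :: "nat \<Rightarrow> real \<Rightarrow> real \<Rightarrow> real" where
  "S_star n a x = (\<Sum>j\<in>{j. 1 \<le> j \<and> j \<le> n \<and> odd j}. binom_ma (n - j) a * sin (real j * x))"

end

theory Submission
  imports Defs
begin

lemma binom_rec: "binom_ma (Suc r) a * real (Suc r) = binom_ma r a * (a + real (Suc r))"
proof -
  have p: "(\<Prod>i=1..Suc r. (a + real i)) = (\<Prod>i=1..r. (a + real i)) * (a + real (Suc r))"
    by (simp add: prod.cl_ivl_Suc)
  have f: "(fact (Suc r) :: real) = real (Suc r) * fact r" by simp
  have fp: "(fact r :: real) > 0" by simp
  define P where "P = (\<Prod>i=1..r. (a + real i))"
  have "P * (a + real (Suc r)) / (real (Suc r) * fact r) * real (Suc r) = P / fact r * (a + real (Suc r))"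
    using fp by (simp add: field_simps del: of_nat_Suc)
  then show ?thesis unfolding binom_ma_def p f P_def .
qed

lemma binom_0: "binom_ma 0 a = 1" by (simp add: binom_ma_def)

lemma binom_1: "binom_ma 1 a = a + 1"
  using binom_rec[of 0 a] by (simp add: binom_0)

lemma binom_a1: "binom_ma r 1 = real r + 1"
proof (induction r)
  case 0 then show ?case by (simp add: binom_0)
next
  case (Suc r)
  have "binom_ma (Suc r) 1 * real (Suc r) = (real (Suc r) + 1) * real (Suc r)"
    using binom_rec[of r 1] Suc by (simp add: algebra_simps)
  then show ?case by (simp del: of_nat_Suc)
qed

lemma binom_ge: assumes "a \<ge> 1" shows "binom_ma r a \<ge> real r + 1"
proof (induction r)
  case 0 then show ?case by (simp add: binom_0)
next
  case (Suc r)
  have "binom_ma r a * (a + real (Suc r)) \<ge> (real r + 1) * (real r + 2)"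
    by (rule mult_mono) (use Suc assms in auto)
  then have "binom_ma (Suc r) a * real (Suc r) \<ge> (real (Suc r) + 1) * real (Suc r)"
    using binom_rec[of r a] by (simp add: algebra_simps)
  then show ?case by (simp add: mult_le_cancel_right)
qed

lemma binom_diff: assumes "a \<ge> 1"
  shows "binom_ma (Suc r) a - binom_ma r a \<ge> 1"
    and "a > 1 \<Longrightarrow> binom_ma (Suc r) a - binom_ma r a > 1"
proof -
  have e: "(binom_ma (Suc r) a - binom_ma r a) * real (Suc r) = binom_ma r a * a"
    using binom_rec[of r a] by (simp add: algebra_simps)
  have g: "binom_ma r a \<ge> real r + 1" using binom_ge[OF assms] .
  have "binom_ma r a * a \<ge> (real r + 1) * 1"
    by (rule mult_mono) (use g assms in auto)
  then have "(binom_ma (Suc r) a - binom_ma r a) * real (Suc r) \<ge> 1 * real (Suc r)"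
    using e by simp
  then show "binom_ma (Suc r) a - binom_ma r a \<ge> 1"
    by (simp add: mult_le_cancel_right)
  assume a1: "a > 1"
  have "binom_ma r a * a > (real r + 1) * 1"
  proof -
    have cp: "binom_ma r a > 0" using g by (smt (verit) of_nat_0_le_iff)
    have "binom_ma r a * a > binom_ma r a * 1" using cp a1 by (rule mult_strict_left_mono[rotated])
    then show ?thesis using g by (metis mult.right_neutral order_le_less_trans)
  qed
  then have "(binom_ma (Suc r) a - binom_ma r a) * real (Suc r) > 1 * real (Suc r)"
    using e by simp
  then show "binom_ma (Suc r) a - binom_ma r a > 1"
    by (simp add: mult_less_cancel_right)
qed

lemma binom_diff2: assumes "a \<ge> 1"
  shows "binom_ma (Suc (Suc r)) a - binom_ma r a \<ge> 2"
    and "a > 1 \<Longrightarrow> binom_ma (Suc (Suc r)) a - binom_ma r a > 2"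
  using binom_diff[OF assms, of r] binom_diff[OF assms, of "Suc r"] by auto

lemma sin_sq_step: "sin (real (Suc k) * x)^2 - sin (real k * x)^2 = sin x * sin (real (2*k+1) * x)"
proof -
  have 1: "real (Suc k) * x = real k * x + x" by (simp add: algebra_simps)
  have 2: "real (2*k+1) * x = 2 * (real k * x) + x" by (simp add: algebra_simps)
  define s where "s = sin (real k * x)"
  define c where "c = cos (real k * x)"
  have sc: "s^2 + c^2 = 1" unfolding s_def c_def by simp
  have uv: "(sin x)^2 + (cos x)^2 = 1" by simp
  show ?thesis unfolding 1 2 sin_add sin_double cos_double s_def[symmetric] c_def[symmetric]
  proof -
    have "(s * cos x + c * sin x)\<^sup>2 - s\<^sup>2 - sin x * (2 * s * c * cos x + (c\<^sup>2 - s\<^sup>2) * sin x)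
          = s^2 * ((sin x)^2 + (cos x)^2 - 1)"
      by algebra
    then show "(s * cos x + c * sin x)\<^sup>2 - s\<^sup>2 = sin x * (2 * s * c * cos x + (c\<^sup>2 - s\<^sup>2) * sin x)"
    proof -
      have z: "s^2 * ((sin x)^2 + (cos x)^2 - 1) = 0" using uv by simp
      show ?thesis using z \<open>_ = s^2 * _\<close> by linarith
    qed
  qed
qed

lemma sin_partial: "sin x * (\<Sum>i<k. sin (real (2*i+1) * x)) = sin (real k * x)^2"
proof (induction k)
  case 0 then show ?case by simp
next
  case (Suc k)
  have "sin x * (\<Sum>i<Suc k. sin (real (2*i+1) * x)) =
        sin x * (\<Sum>i<k. sin (real (2*i+1) * x)) + sin x * sin (real (2*k+1) * x)"
    by (simp add: algebra_simps)
  also have "\<dots> = sin (real (Suc k) * x)^2" using Suc sin_sq_step[of k x] by simp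
  finally show ?case .
qed

lemma by_parts:
  fixes d s :: "nat \<Rightarrow> real"
  shows "(\<Sum>k<m. d k * s k) = (\<Sum>k<m. (d k - d (Suc k)) * (\<Sum>i<Suc k. s i)) + d m * (\<Sum>i<m. s i)"
  by (induction m) (simp_all add: algebra_simps)

theorem theorem3p6:
  fixes n :: nat and a x :: real
  assumes "even n" and "n \<ge> 2" and "a \<ge> 1" and "0 < x" and "x < pi"
  shows "S_star n a x \<ge> 2 * sin x \<and>
         (S_star n a x = 2 * sin x \<longleftrightarrow>
            (n = 2 \<and> a = 1) \<or> (n = 4 \<and> a = 1 \<and> x = pi / 2))"
proof -
  define m where "m = n div 2"
  have nm: "n = 2 * m" using assms(1) unfolding m_def by simp
  have m1: "m \<ge> 1" using assms(2) nm by simp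
  define c where "c = (\<lambda>r. binom_ma r a)"
  define d where "d = (\<lambda>k. if k < m then c (n - (2*k+1)) else 0)"
  define t where "t = (\<lambda>k::nat. sin (real (Suc k) * x)^2)"
  have sx: "sin x > 0" using assms(4,5) sin_gt_zero by blast
  have seteq: "{j. 1 \<le> j \<and> j \<le> n \<and> odd j} = (\<lambda>k. 2*k+1) ` {..<m}"
  proof (intro set_eqI iffI)
    fix j assume "j \<in> {j. 1 \<le> j \<and> j \<le> n \<and> odd j}"
    then have j: "j \<le> n" "odd j" by auto
    then have "j = 2 * (j div 2) + 1" "j div 2 < m" using nm by presburger+
    then show "j \<in> (\<lambda>k. 2*k+1) ` {..<m}" by (intro image_eqI[of _ _ "j div 2"]) auto
  next
    fix j assume "j \<in> (\<lambda>k. 2*k+1) ` {..<m}"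
    then show "j \<in> {j. 1 \<le> j \<and> j \<le> n \<and> odd j}" using nm by auto
  qed
  have inj: "inj_on (\<lambda>k::nat. 2*k+1) {..<m}" by (auto simp: inj_on_def)
  have S1: "S_star n a x = (\<Sum>k<m. d k * sin (real (2*k+1) * x))"
    unfolding S_star_def seteq sum.reindex[OF inj] d_def c_def by simp
  have dm: "d m = 0" unfolding d_def by simp
  have S2: "sin x * S_star n a x = (\<Sum>k<m. (d k - d (Suc k)) * t k)"
  proof -
    have "sin x * S_star n a x = sin x * (\<Sum>k<m. (d k - d (Suc k)) * (\<Sum>i<Suc k. sin (real (2*i+1) * x)))"
      unfolding S1 by_parts[of d "\<lambda>i. sin (real (2*i+1) * x)" m] dm by simp
    also have "\<dots> = (\<Sum>k<m. (d k - d (Suc k)) * (sin x * (\<Sum>i<Suc k. sin (real (2*i+1) * x))))"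
      by (simp add: sum_distrib_left mult.left_commute)
    also have "\<dots> = (\<Sum>k<m. (d k - d (Suc k)) * t k)"
      unfolding sin_partial t_def ..
    finally show ?thesis .
  qed
  have dbig: "d k - d (Suc k) \<ge> 2 \<and> (a > 1 \<longrightarrow> d k - d (Suc k) > 2)" if "Suc k < m" for k
  proof -
    have "n - (2*k+1) = Suc (Suc (n - (2*Suc k+1)))" using that nm by simp
    then have "d k - d (Suc k) = c (Suc (Suc (n - (2*Suc k+1)))) - c (n - (2*Suc k+1))"
      unfolding d_def using that by simp
    then show ?thesis unfolding c_def using binom_diff2[OF assms(3)] by simp
  qed
  have dlast: "d (m - 1) - d m = a + 1"
  proof -
    have "n - (2*(m-1)+1) = 1" using nm m1 by simp
    then show ?thesis unfolding d_def c_def using m1 binom_1[of a] by simp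
  qed
  have dpos: "d k - d (Suc k) > 0" if "k < m" for k
  proof (cases "Suc k < m")
    case True then show ?thesis using dbig by force
  next
    case False then have "k = m - 1" using that by simp
    then show ?thesis using dlast m1 assms(3) by simp
  qed
  have d0: "d 0 - d 1 \<ge> 2 \<and> (d 0 - d 1 = 2 \<longrightarrow> a = 1)"
  proof (cases "m = 1")
    case True then show ?thesis using dlast assms(3) by simp
  next
    case False then have "Suc 0 < m" using m1 by simp
    then show ?thesis using dbig[of 0] assms(3) by force
  qed
  define e where "e = (\<lambda>k. (d k - d (Suc k)) - (if k = 0 then 2 else 0))"
  have F: "sin x * S_star n a x - 2 * (sin x)^2 = (\<Sum>k<m. e k * t k)"
  proof -
    have "(\<Sum>k<m. e k * t k) = (\<Sum>k<m. (d k - d (Suc k)) * t k) - (\<Sum>k<m. (if k = 0 then 2 * t k else 0))"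
    proof -
      have "(\<Sum>k<m. e k * t k) = (\<Sum>k<m. (d k - d (Suc k)) * t k - (if k = 0 then 2 * t k else 0))"
        by (rule sum.cong) (auto simp: e_def algebra_simps)
      then show ?thesis by (simp only: sum_subtractf)
    qed
    also have "(\<Sum>k<m. (if k = 0 then 2 * t k else 0)) = 2 * t 0"
      using m1 by (simp add: sum.delta)
    finally show ?thesis using S2 by (simp add: t_def)
  qed
  have enn: "e k * t k \<ge> 0" if "k \<in> {..<m}" for k
  proof -
    have "e k \<ge> 0" using that dpos[of k] d0 unfolding e_def by auto
    then show ?thesis unfolding t_def by simp
  qed
  have Fnn: "sin x * S_star n a x - 2 * (sin x)^2 \<ge> 0" unfolding F using enn by (rule sum_nonneg)
  have ineq: "S_star n a x \<ge> 2 * sin x"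
  proof -
    have "sin x * S_star n a x \<ge> sin x * (2 * sin x)" using Fnn by (simp add: power2_eq_square)
    then show ?thesis using sx by (simp add: mult_le_cancel_left)
  qed
  have eqiff: "S_star n a x = 2 * sin x \<longleftrightarrow> (\<forall>k\<in>{..<m}. e k * t k = 0)"
  proof -
    have "S_star n a x = 2 * sin x \<longleftrightarrow> sin x * S_star n a x - 2 * (sin x)^2 = 0"
      using sx by (auto simp: power2_eq_square)
    also have "\<dots> \<longleftrightarrow> (\<forall>k\<in>{..<m}. e k * t k = 0)"
      unfolding F by (rule sum_nonneg_eq_0_iff) (use enn in auto)
    finally show ?thesis .
  qed
  have cond: "(\<forall>k\<in>{..<m}. e k * t k = 0) \<longleftrightarrow> (m = 1 \<and> a = 1) \<or> (m = 2 \<and> a = 1 \<and> x = pi / 2)"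
  proof
    assume H: "\<forall>k\<in>{..<m}. e k * t k = 0"
    have t0: "t 0 > 0" unfolding t_def using sx by simp
    have "e 0 * t 0 = 0" using H m1 by auto
    then have "e 0 = 0" using t0 by simp
    then have a1: "a = 1" using d0 unfolding e_def by simp
    show "(m = 1 \<and> a = 1) \<or> (m = 2 \<and> a = 1 \<and> x = pi / 2)"
    proof (cases "m = 1")
      case True then show ?thesis using a1 by simp
    next
      case False
      then have m2: "1 < m" using m1 by simp
      have "e 1 > 0" using dpos[OF m2] unfolding e_def by simp
      then have "t 1 = 0" using H m2 by force
      then have "sin (2 * x) = 0" unfolding t_def by (simp add: numeral_2_eq_2 del: sin_double)
      then have "cos x = 0" using sx by (simp add: sin_double)
      then have xp: "x = pi / 2"
        using cos_inj_pi[of x "pi/2"] assms(4,5) by simp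
      have "m = 2"
      proof (rule ccontr)
        assume "m \<noteq> 2"
        then have m3: "2 < m" using m2 by simp
        have "e 2 > 0" using dpos[OF m3] unfolding e_def by simp
        then have "t 2 = 0" using H m3 by force
        moreover have "sin (real (Suc 2) * (pi/2)) = -1"
        proof -
          have e: "real (Suc 2) * (pi/2) = pi/2 + pi" by simp
          have "sin (pi/2 + pi) = -1" by (simp only: sin_periodic_pi sin_pi_half)
          then show ?thesis by (simp only: e)
        qed
        ultimately show False unfolding t_def xp by simp
      qed
      then show ?thesis using a1 xp by simp
    qed
  next
    assume "(m = 1 \<and> a = 1) \<or> (m = 2 \<and> a = 1 \<and> x = pi / 2)"
    then show "\<forall>k\<in>{..<m}. e k * t k = 0"
    proof
      assume A: "m = 1 \<and> a = 1"
      then have "e 0 = 0" using dlast unfolding e_def by simp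
      then show ?thesis using A by simp
    next
      assume A: "m = 2 \<and> a = 1 \<and> x = pi / 2"
      have c3: "c 3 = 4" and c1: "c 1 = 2" unfolding c_def
        using A binom_a1[of 3] binom_a1[of 1] by simp_all
      have "e 0 = 0" unfolding e_def d_def using A nm c3 c1 by simp
      moreover have "t 1 = 0" unfolding t_def using A by (simp add: mult.commute)
      ultimately show ?thesis using A by (auto simp: lessThan_Suc numeral_2_eq_2)
    qed
  qed
  show ?thesis using ineq eqiff cond nm by auto
qed

end
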